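(* For every positive integer $n$, \[ \sum_{i=1}^{n}2^{\omega(i)}=\sum_{1\leq i^{2}\leq n}\mu(i)\,D_{2}\!\left(\left\lfloor\frac{n}{i^{2}}\right\rfloor\right)=2n-1+2\sum_{1<i^{2}<n}\left(\varphi\!\left(\left\lfloor\frac{n}{i}\right\rfloor,i\right)-\varphi(i)\right), \] where the sums on the right run over positive integers $i$ satisfying the indicated conditions.
   Context: $\omega(i)$ is the number of distinct prime divisors of $i$; $\mu$ is the Möbius function; $D_{2}(m)$ is the number of ordered pairs $(a,b)$ of positive integers with $ab\leq m$ (equivalently $D_{2}(m)=\sum_{j\leq m}\tau(j)$ with $\tau$ the number-of-divisors function); for real $x$ and positive integer $a$, $\varphi(x,a)$ is the number of positive integers not exceeding $x$ that are relatively prime to $a$, and $\varphi(a)=\varphi(a,a)$ is Euler's totient function. *)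

theory Defs
  imports "HOL-Number_Theory.Number_Theory" "HOL-Computational_Algebra.Squarefree"
begin

definition omega :: "nat \<Rightarrow> nat" where
  "omega i = card (prime_factors i)"

definition moebius :: "nat \<Rightarrow> int" where
  "moebius i = (if squarefree i then (-1) ^ card (prime_factors i) else 0)"

definition D2 :: "nat \<Rightarrow> nat" where
  "D2 m = card {(a :: nat, b :: nat). 0 < a \<and> 0 < b \<and> a * b \<le> m}"

definition phi :: "real \<Rightarrow> nat \<Rightarrow> nat" where
  "phi x a = card {k :: nat. 0 < k \<and> real k \<le> x \<and> coprime k a}"

end

theory Submission
  imports Defs
begin


lemma unitary_part:
  fixes a b m :: nat
  assumes "coprime a b" "a * b = m" "m > 0"
  shows "a = (\<Prod>p\<in>prime_factors a. p ^ multiplicity p m)"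
proof -
  have a0: "a > 0" and b0: "b > 0" using assms by auto
  have "a = (\<Prod>p\<in>prime_factors a. p ^ multiplicity p a)"
    using prime_factorization_nat[OF a0] .
  also have "\<dots> = (\<Prod>p\<in>prime_factors a. p ^ multiplicity p m)"
  proof (rule prod.cong[OF refl])
    fix p assume p: "p \<in> prime_factors a"
    hence pp: "prime p" and pa: "p dvd a" by auto
    have "\<not> p dvd b"
    proof
      assume "p dvd b"
      with pa have "p dvd gcd a b" by simp
      with assms(1) pp show False by (simp add: prime_nat_iff)
    qed
    hence "multiplicity p b = 0" by (simp add: not_dvd_imp_multiplicity_0)
    moreover have "multiplicity p m = multiplicity p a + multiplicity p b"
      using assms(2) a0 b0 pp by (metis prime_elem_multiplicity_mult_distrib prime_imp_prime_elem not_gr0)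
    ultimately show "p ^ multiplicity p a = p ^ multiplicity p m" by simp
  qed
  finally show ?thesis .
qed

lemma unitary_pf:
  fixes a b m :: nat
  assumes "coprime a b" "a * b = m" "m > 0"
  shows "prime_factors b = prime_factors m - prime_factors a"
proof -
  have a0: "a > 0" and b0: "b > 0" using assms by auto
  have u: "prime_factors m = prime_factors a \<union> prime_factors b"
    using assms(2) a0 b0 prime_factors_product by (metis not_gr0)
  have "prime_factors a \<inter> prime_factors b = {}"
  proof (rule ccontr)
    assume "prime_factors a \<inter> prime_factors b \<noteq> {}"
    then obtain p where "p \<in> prime_factors a" "p \<in> prime_factors b" by blast
    hence "prime p" "p dvd a" "p dvd b" by auto
    hence "p dvd gcd a b" by simp
    with assms(1) \<open>prime p\<close> show False by (simp add: prime_nat_iff)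
  qed
  with u show ?thesis by blast
qed

lemma pf_prod_powers:
  fixes S :: "nat set" and f :: "nat \<Rightarrow> nat"
  assumes "finite S" "\<And>p. p \<in> S \<Longrightarrow> prime p" "\<And>p. p \<in> S \<Longrightarrow> f p > 0"
  shows "prime_factors (\<Prod>p\<in>S. p ^ f p) = S"
proof -
  have "prime_factors (\<Prod>p\<in>S. p ^ f p) = {p. prime p \<and> multiplicity p (\<Prod>p\<in>S. p ^ f p) > 0}"
    by (rule prime_factors_multiplicity)
  also have "\<dots> = S"
    using multiplicity_prod_prime_powers[OF assms(1,2)] assms(2,3) by (auto split: if_splits)
  finally show ?thesis .
qed

lemma card_unitary:
  fixes m :: nat
  assumes "m > 0"
  shows "card {(a, b). a * b = m \<and> coprime a b} = 2 ^ card (prime_factors m)"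
proof -
  define P where "P = prime_factors m"
  define G where "G = (\<lambda>S. ((\<Prod>p\<in>S. p ^ multiplicity p m), (\<Prod>p\<in>P - S. p ^ multiplicity p m)))"
  define T where "T = {(a, b). a * b = m \<and> coprime a b}"
  have finP: "finite P" unfolding P_def by simp
  have primeP: "\<And>p. p \<in> P \<Longrightarrow> prime p" unfolding P_def by auto
  have multP: "\<And>p. p \<in> P \<Longrightarrow> multiplicity p m > 0" unfolding P_def
    using prime_factors_multiplicity by blast
  have pfG: "prime_factors (fst (G S)) = S" if "S \<subseteq> P" for S
    unfolding G_def fst_conv
    by (rule pf_prod_powers) (use that finP primeP multP finite_subset in auto)
  have GT: "G S \<in> T" if "S \<subseteq> P" for S
  proof -
    have "fst (G S) * snd (G S) = (\<Prod>p\<in>P. p ^ multiplicity p m)"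
      unfolding G_def fst_conv snd_conv
      using prod.subset_diff[OF that finP, of "\<lambda>p. p ^ multiplicity p m"] by (simp add: mult.commute)
    also have "\<dots> = m" unfolding P_def using prime_factorization_nat[OF assms] by simp
    finally have e: "fst (G S) * snd (G S) = m" .
    have "coprime (fst (G S)) (snd (G S))"
      unfolding G_def fst_conv snd_conv
    proof (intro prod_coprime_left prod_coprime_right)
      fix i j assume "i \<in> S" "j \<in> P - S"
      hence "prime i" "prime j" "i \<noteq> j" using that primeP by auto
      hence "coprime i j" by (rule primes_coprime)
      thus "coprime (i ^ multiplicity i m) (j ^ multiplicity j m)" by simp
    qed
    with e show ?thesis unfolding T_def by (auto simp: case_prod_beta)
  qed
  have "bij_betw G (Pow P) T"
  proof (rule bij_betw_byWitness[where f' = "\<lambda>x. prime_factors (fst x)"])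
    show "\<forall>S\<in>Pow P. prime_factors (fst (G S)) = S" using pfG by auto
    show "\<forall>x\<in>T. G (prime_factors (fst x)) = x"
    proof
      fix x assume "x \<in> T"
      then obtain a b where x: "x = (a, b)" "a * b = m" "coprime a b" unfolding T_def by auto
      have ba: "coprime b a" using x(3) by (simp add: ac_simps)
      have "b * a = m" using x(2) by (simp add: ac_simps)
      have "fst (G (prime_factors a)) = a"
        unfolding G_def using unitary_part[OF x(3) x(2) assms] by simp
      moreover have "snd (G (prime_factors a)) = b"
        unfolding G_def snd_conv P_def
        using unitary_part[OF ba \<open>b * a = m\<close> assms] unitary_pf[OF x(3) x(2) assms] by simp
      ultimately show "G (prime_factors (fst x)) = x" using x(1) by (simp add: prod_eq_iff)
    qed
    show "G ` Pow P \<subseteq> T" using GT by auto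
    show "(\<lambda>x. prime_factors (fst x)) ` T \<subseteq> Pow P"
    proof
      fix S assume "S \<in> (\<lambda>x. prime_factors (fst x)) ` T"
      then obtain x where "x \<in> T" "S = prime_factors (fst x)" by blast
      then obtain a b where "S = prime_factors a" "a * b = m" "coprime a b" unfolding T_def by (cases x) auto
      thus "S \<in> Pow P" unfolding P_def using assms by (auto simp: prime_factors_product)
    qed
  qed
  hence "card T = card (Pow P)" by (simp add: bij_betw_same_card)
  thus ?thesis unfolding T_def using card_Pow[OF finP] unfolding P_def by simp
qed



lemma sum_pow_neg_one:
  assumes "finite P"
  shows "(\<Sum>X\<in>Pow P. (-1::int) ^ card X) = (if P = {} then 1 else 0)"
proof -
  have "(\<Prod>x\<in>P. (1::int) - 1) = (\<Sum>X\<in>Pow P. (-1) ^ card X * (\<Prod>x\<in>X. 1) * (\<Prod>x\<in>P-X. 1))"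
    by (rule prod_diff_conv_sum[OF assms])
  hence "(\<Sum>X\<in>Pow P. (-1::int) ^ card X) = (\<Prod>x\<in>P. (0::int))" by simp
  also have "\<dots> = (if P = {} then 1 else 0)" using assms by auto
  finally show ?thesis .
qed

lemma moebius_sum:
  fixes k :: nat
  assumes "k > 0"
  shows "(\<Sum>d\<in>{d. d dvd k}. moebius d) = (if k = 1 then 1 else 0)"
proof -
  define P where "P = prime_factors k"
  define SQ where "SQ = {d. d dvd k \<and> squarefree d}"
  have finP: "finite P" unfolding P_def by simp
  have primeP: "\<And>p. p \<in> P \<Longrightarrow> prime p" unfolding P_def by auto
  have multP: "\<And>p. p \<in> P \<Longrightarrow> multiplicity p k > 0" unfolding P_def
    using prime_factors_multiplicity by blast
  have fin: "finite {d. d dvd k}" using assms by (simp add: finite_divisors_nat)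
  have "(\<Sum>d\<in>{d. d dvd k}. moebius d) = (\<Sum>d\<in>SQ. moebius d)"
    by (rule sum.mono_neutral_right[OF fin]) (auto simp: SQ_def moebius_def)
  also have "\<dots> = (\<Sum>d\<in>SQ. (-1) ^ card (prime_factors d))"
    by (rule sum.cong) (auto simp: SQ_def moebius_def)
  also have "\<dots> = (\<Sum>S\<in>Pow P. (-1) ^ card (prime_factors (\<Prod>p\<in>S. p)))"
  proof (rule sum.reindex_bij_betw[symmetric])
    have pfS: "prime_factors (\<Prod>p\<in>S. p) = S" if "S \<subseteq> P" for S
    proof -
      have "finite S" using that finP finite_subset by blast
      moreover have "\<And>x. x \<in> S \<Longrightarrow> prime x" using that primeP by blast
      ultimately show ?thesis using pf_prod_powers[of S "\<lambda>_. 1"] by simp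
    qed
    have multS: "multiplicity q (\<Prod>p\<in>S. p) = (if q \<in> S then 1 else 0)"
      if "S \<subseteq> P" "prime q" for S q
    proof -
      have "finite S" using that finP finite_subset by blast
      moreover have "\<And>x. x \<in> S \<Longrightarrow> prime x" using that primeP by blast
      ultimately show ?thesis using multiplicity_prod_prime_powers[of S q "\<lambda>_. 1"] that(2) by simp
    qed
    have nz: "(\<Prod>p\<in>S. p) \<noteq> 0" if "S \<subseteq> P" for S
    proof -
      have "0 \<notin> S" using that primeP not_prime_0 by blast
      thus ?thesis using finite_subset[OF that finP] by (simp add: prod_zero_iff)
    qed
    show "bij_betw (\<lambda>S. \<Prod>p\<in>S. p) (Pow P) SQ"
    proof (rule bij_betw_byWitness[where f' = prime_factors])
      show "\<forall>S\<in>Pow P. prime_factors (\<Prod>p\<in>S. p) = S" using pfS by auto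
      show "\<forall>d\<in>SQ. (\<Prod>p\<in>prime_factors d. p) = d"
      proof
        fix d assume "d \<in> SQ"
        hence sq: "squarefree d" and d0: "d > 0" unfolding SQ_def using assms
          by (auto intro: Nat.gr0I)
        have "d = (\<Prod>p\<in>prime_factors d. p ^ multiplicity p d)"
          using prime_factorization_nat[OF d0] .
        also have "\<dots> = (\<Prod>p\<in>prime_factors d. p)"
          using sq d0 squarefree_factorial_semiring'[of d] by (intro prod.cong) auto
        finally show "(\<Prod>p\<in>prime_factors d. p) = d" by simp
      qed
      show "(\<lambda>S. \<Prod>p\<in>S. p) ` Pow P \<subseteq> SQ"
      proof
        fix d assume "d \<in> (\<lambda>S. \<Prod>p\<in>S. p) ` Pow P"
        then obtain S where S: "S \<subseteq> P" "d = (\<Prod>p\<in>S. p)" by auto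
        have "d dvd k"
          unfolding S(2) using nz[OF S(1)] assms multS[OF S(1)] S(1) multP
          by (subst prime_multiplicity_le_imp_dvd) (auto simp: Suc_le_eq)
        moreover have "squarefree d"
          unfolding S(2) using nz[OF S(1)] multS[OF S(1)]
          by (subst squarefree_factorial_semiring'') auto
        ultimately show "d \<in> SQ" unfolding SQ_def by simp
      qed
      show "prime_factors ` SQ \<subseteq> Pow P"
      proof
        fix S assume "S \<in> prime_factors ` SQ"
        then obtain d where "d dvd k" "S = prime_factors d" unfolding SQ_def by auto
        thus "S \<in> Pow P" unfolding P_def using assms dvd_prime_factors[of k d] by simp
      qed
    qed
  qed
  also have "\<dots> = (\<Sum>S\<in>Pow P. (-1) ^ card S)"
  proof (rule sum.cong[OF refl])
    fix S assume "S \<in> Pow P"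
    hence "finite S" "\<And>p. p \<in> S \<Longrightarrow> prime p" using finP primeP finite_subset by auto
    thus "(-1) ^ card (prime_factors (\<Prod>p\<in>S. p)) = (-1::int) ^ card S"
      using pf_prod_powers[of S "\<lambda>_. 1"] by simp
  qed
  also have "\<dots> = (if P = {} then 1 else 0)" by (rule sum_pow_neg_one[OF finP])
  also have "(P = {}) = (k = 1)"
    unfolding P_def using assms by (auto simp: prime_factorization_empty_iff)
  finally show ?thesis .
qed



lemma sum_unitary:
  fixes n :: nat
  shows "(\<Sum>i=1..n. 2 ^ omega i) = card {(a, b). 0 < a \<and> 0 < b \<and> a * b \<le> n \<and> coprime a b}"
proof -
  define T where "T = (\<lambda>i::nat. {(a, b). a * b = i \<and> coprime a b})"
  have finT: "finite (T i)" if "i > 0" for i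
  proof (rule finite_subset)
    show "T i \<subseteq> {..i} \<times> {..i}"
    proof
      fix x assume "x \<in> T i"
      then obtain a b where x: "x = (a, b)" "a * b = i" unfolding T_def by auto
      show "x \<in> {..i} \<times> {..i}"
      proof (cases "i = 0")
        case True thus ?thesis using that by simp
      next
        case False
        hence "a > 0" "b > 0" using x by auto
        hence "a \<le> i" "b \<le> i" using x by (auto intro: dvd_imp_le simp: dvd_def)
        thus ?thesis using x by auto
      qed
    qed
  qed auto
  have "(\<Sum>i=1..n. 2 ^ omega i) = (\<Sum>i=1..n. card (T i))"
    by (rule sum.cong) (auto simp: T_def omega_def card_unitary)
  also have "\<dots> = card (\<Union>i\<in>{1..n}. T i)"
    by (rule card_UN_disjoint[symmetric]) (auto intro!: finT, auto simp: T_def)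
  also have "(\<Union>i\<in>{1..n}. T i) = {(a, b). 0 < a \<and> 0 < b \<and> a * b \<le> n \<and> coprime a b}"
    unfolding T_def by auto
  finally show ?thesis .
qed

lemma int_card_filter:
  assumes "finite Q"
  shows "int (card {x\<in>Q. P x}) = (\<Sum>x\<in>Q. if P x then 1 else 0)"
  using assms by (simp add: sum.If_cases Int_def conj_commute)

lemma D2_scale:
  fixes n d :: nat
  assumes "d > 0"
  shows "D2 (n div d^2) = card {x\<in>{(a, b). 0 < a \<and> 0 < b \<and> a * b \<le> n}. d dvd fst x \<and> d dvd snd x}"
proof -
  define f where "f = (\<lambda>(a::nat, b::nat). (d * a, d * b))"
  have inj: "inj_on f X" for X unfolding f_def inj_on_def using assms by auto
  have key: "a * b \<le> n div d^2 \<longleftrightarrow> (d * a) * (d * b) \<le> n" for a b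
    using assms by (simp add: less_eq_div_iff_mult_less_eq power2_eq_square ac_simps)
  have "f ` {(a, b). 0 < a \<and> 0 < b \<and> a * b \<le> n div d^2}
        = {x\<in>{(a, b). 0 < a \<and> 0 < b \<and> a * b \<le> n}. d dvd fst x \<and> d dvd snd x}"
  proof (rule equalityI; rule subsetI)
    fix x assume "x \<in> f ` {(a, b). 0 < a \<and> 0 < b \<and> a * b \<le> n div d^2}"
    then obtain a b where "x = (d * a, d * b)" "0 < a" "0 < b" "a * b \<le> n div d^2"
      unfolding f_def by auto
    thus "x \<in> {x\<in>{(a, b). 0 < a \<and> 0 < b \<and> a * b \<le> n}. d dvd fst x \<and> d dvd snd x}"
      using key assms by auto
  next
    fix x assume "x \<in> {x\<in>{(a, b). 0 < a \<and> 0 < b \<and> a * b \<le> n}. d dvd fst x \<and> d dvd snd x}"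
    then obtain a b where x: "x = (d * a, d * b)" "0 < d * a" "0 < d * b" "(d * a) * (d * b) \<le> n"
      by (auto elim!: dvdE)
    hence "(a, b) \<in> {(a, b). 0 < a \<and> 0 < b \<and> a * b \<le> n div d^2}" using key by auto
    thus "x \<in> f ` {(a, b). 0 < a \<and> 0 < b \<and> a * b \<le> n div d^2}" unfolding f_def using x(1)
      by (auto intro!: image_eqI[where x = "(a, b)"])
  qed
  moreover have "D2 (n div d^2) = card (f ` {(a, b). 0 < a \<and> 0 < b \<and> a * b \<le> n div d^2})"
    unfolding D2_def by (rule card_image[OF inj, symmetric])
  ultimately show ?thesis by simp
qed



lemma ident1:
  fixes n :: nat
  shows "int (card {(a, b). 0 < a \<and> 0 < b \<and> a * b \<le> n \<and> coprime a b})
     = (\<Sum>i\<in>{i::nat. 1 \<le> i^2 \<and> i^2 \<le> n}. moebius i * int (D2 (n div i^2)))"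
proof -
  define Q where "Q = {(a::nat, b::nat). 0 < a \<and> 0 < b \<and> a * b \<le> n}"
  define D where "D = {i::nat. 1 \<le> i^2 \<and> i^2 \<le> n}"
  have finQ: "finite Q"
  proof (rule finite_subset)
    show "Q \<subseteq> {..n} \<times> {..n}"
    proof
      fix x assume "x \<in> Q"
      then obtain a b where x: "x = (a, b)" "0 < a" "0 < b" "a * b \<le> n" unfolding Q_def by auto
      have "a \<le> a * b" "b \<le> a * b" using x by auto
      hence "a \<le> n" "b \<le> n" using x(4) by linarith+
      thus "x \<in> {..n} \<times> {..n}" using x by auto
    qed
  qed auto
  have finD: "finite D"
  proof (rule finite_subset)
    show "D \<subseteq> {..n}"
    proof
      fix i assume "i \<in> D"
      hence "i^2 \<le> n" unfolding D_def by auto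
      moreover have "i \<le> i^2" by (cases i) (auto simp: power2_eq_square)
      ultimately show "i \<in> {..n}" by auto
    qed
  qed auto
  have "(\<Sum>i\<in>D. moebius i * int (D2 (n div i^2)))
      = (\<Sum>d\<in>D. moebius d * (\<Sum>x\<in>Q. if d dvd fst x \<and> d dvd snd x then 1 else 0))"
  proof (rule sum.cong[OF refl])
    fix d assume "d \<in> D"
    hence "d > 0" unfolding D_def by (cases d) auto
    thus "moebius d * int (D2 (n div d^2)) = moebius d * (\<Sum>x\<in>Q. if d dvd fst x \<and> d dvd snd x then 1 else 0)"
      using D2_scale[of d n] int_card_filter[OF finQ] unfolding Q_def by simp
  qed
  also have "\<dots> = (\<Sum>d\<in>D. \<Sum>x\<in>Q. if d dvd gcd (fst x) (snd x) then moebius d else 0)"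
    by (simp add: sum_distrib_left if_distrib cong: if_cong)
  also have "\<dots> = (\<Sum>x\<in>Q. \<Sum>d\<in>D. if d dvd gcd (fst x) (snd x) then moebius d else 0)"
    by (rule sum.swap)
  also have "\<dots> = (\<Sum>x\<in>Q. \<Sum>d\<in>{d. d dvd gcd (fst x) (snd x)}. moebius d)"
  proof (rule sum.cong[OF refl])
    fix x assume "x \<in> Q"
    then obtain a b where x: "x = (a, b)" "0 < a" "0 < b" "a * b \<le> n" unfolding Q_def by auto
    have "{d\<in>D. d dvd gcd a b} = {d. d dvd gcd a b}"
    proof (rule equalityI; rule subsetI)
      fix d assume "d \<in> {d. d dvd gcd a b}"
      hence "d dvd a" "d dvd b" by auto
      hence "d \<le> a" "d \<le> b" "d > 0" using x by (auto intro: dvd_imp_le Nat.gr0I)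
      hence "d * d \<le> a * b" by (simp add: mult_le_mono)
      with \<open>d > 0\<close> x(4) have "1 \<le> d^2" "d^2 \<le> n" by (auto simp: power2_eq_square)
      thus "d \<in> {d\<in>D. d dvd gcd a b}" using \<open>d dvd a\<close> \<open>d dvd b\<close> unfolding D_def by auto
    qed auto
    thus "(\<Sum>d\<in>D. if d dvd gcd (fst x) (snd x) then moebius d else 0) = (\<Sum>d\<in>{d. d dvd gcd (fst x) (snd x)}. moebius d)"
      using x(1) sum.inter_filter[OF finD, of moebius "\<lambda>d. d dvd gcd a b"] by simp
  qed
  also have "\<dots> = (\<Sum>x\<in>Q. if coprime (fst x) (snd x) then 1 else 0)"
  proof (rule sum.cong[OF refl])
    fix x assume "x \<in> Q"
    hence "gcd (fst x) (snd x) > 0" unfolding Q_def by auto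
    thus "(\<Sum>d\<in>{d. d dvd gcd (fst x) (snd x)}. moebius d) = (if coprime (fst x) (snd x) then 1 else 0)"
      unfolding coprime_iff_gcd_eq_1 by (rule moebius_sum)
  qed
  also have "\<dots> = int (card {x\<in>Q. coprime (fst x) (snd x)})"
    by (rule int_card_filter[OF finQ, symmetric])
  also have "{x\<in>Q. coprime (fst x) (snd x)} = {(a, b). 0 < a \<and> 0 < b \<and> a * b \<le> n \<and> coprime a b}"
    unfolding Q_def by auto
  finally show ?thesis unfolding D_def by simp
qed



lemma ident2:
  fixes n :: nat
  assumes "n > 0"
  shows "int (card {(a, b). 0 < a \<and> 0 < b \<and> a * b \<le> n \<and> coprime a b})
     = 2 * int n - 1 + 2 * (\<Sum>i\<in>{i::nat. 1 < i^2 \<and> i^2 < n}.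
                 (int (phi (real_of_int \<lfloor>real n / real i\<rfloor>) i) - int (totient i)))"
proof -
  define C where "C = {(a::nat, b::nat). 0 < a \<and> 0 < b \<and> a * b \<le> n \<and> coprime a b}"
  define L where "L = {x\<in>C. fst x < snd x}"
  define U where "U = {x\<in>C. snd x < fst x}"
  define I where "I = {i::nat. 1 < i^2 \<and> i^2 < n}"
  define B where "B = (\<lambda>a::nat. {b::nat. a < b \<and> b \<le> n div a \<and> coprime b a})"
  have finC: "finite C"
  proof (rule finite_subset)
    show "C \<subseteq> {..n} \<times> {..n}"
    proof
      fix x assume "x \<in> C"
      then obtain a b where x: "x = (a, b)" "0 < a" "0 < b" "a * b \<le> n" unfolding C_def by auto
      have "a \<le> a * b" "b \<le> a * b" using x by auto
      hence "a \<le> n" "b \<le> n" using x(4) by linarith+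
      thus "x \<in> {..n} \<times> {..n}" using x by auto
    qed
  qed auto
  have finI: "finite I"
  proof (rule finite_subset)
    show "I \<subseteq> {..n}"
    proof
      fix i assume "i \<in> I"
      hence "i^2 \<le> n" unfolding I_def by auto
      moreover have "i \<le> i^2" by (cases i) (auto simp: power2_eq_square)
      ultimately show "i \<in> {..n}" by auto
    qed
  qed auto
  have finB: "finite (B a)" for a
    by (rule finite_subset[of _ "{..n}"]) (auto simp: B_def intro: order_trans[OF _ div_le_dividend])
  have 1: "1 \<notin> I" unfolding I_def by auto
  have Ceq: "C = insert (1, 1) (L \<union> U)"
  proof (rule equalityI; rule subsetI)
    fix x assume "x \<in> C"
    then obtain a b where x: "x = (a, b)" "coprime a b" unfolding C_def by auto
    show "x \<in> insert (1, 1) (L \<union> U)"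
    proof (cases "a = b")
      case True
      hence "a = 1" using x by simp
      thus ?thesis using x True by simp
    next
      case False
      thus ?thesis using x \<open>x \<in> C\<close> unfolding L_def U_def by auto
    qed
  next
    fix x assume "x \<in> insert (1, 1) (L \<union> U)"
    thus "x \<in> C" using assms unfolding L_def U_def C_def by (auto simp: Suc_le_eq)
  qed
  have cardC: "card C = 1 + card L + card U"
  proof -
    have "(1, 1) \<notin> L \<union> U" unfolding L_def U_def by auto
    moreover have "L \<inter> U = {}" unfolding L_def U_def by auto
    moreover have "finite L" "finite U" using finC unfolding L_def U_def by auto
    ultimately show ?thesis unfolding Ceq by (simp add: card_Un_disjoint)
  qed
  have "U = (\<lambda>(a, b). (b, a)) ` L"
  proof (rule equalityI; rule subsetI)
    fix x assume "x \<in> U"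
    then obtain a b where x: "x = (a, b)" "(a, b) \<in> U" by (cases x) auto
    hence "(b, a) \<in> L" unfolding U_def L_def C_def by (auto simp: ac_simps coprime_commute)
    thus "x \<in> (\<lambda>(a, b). (b, a)) ` L" using x by (auto intro!: image_eqI[where x = "(b, a)"])
  next
    fix x assume "x \<in> (\<lambda>(a, b). (b, a)) ` L"
    thus "x \<in> U" unfolding U_def L_def C_def by (auto simp: ac_simps coprime_commute)
  qed
  moreover have "inj_on (\<lambda>(a::nat, b::nat). (b, a)) L" unfolding inj_on_def by auto
  ultimately have cardU: "card U = card L" by (simp add: card_image)
  have Leq: "L = Sigma (insert 1 I) B"
  proof (rule equalityI; rule subsetI)
    fix x assume "x \<in> L"
    then obtain a b where x: "x = (a, b)" "0 < a" "a < b" "a * b \<le> n" "coprime a b"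
      unfolding L_def C_def by auto
    have "b \<le> n div a" using x by (simp add: less_eq_div_iff_mult_less_eq ac_simps)
    hence bB: "b \<in> B a" using x unfolding B_def by (auto simp: coprime_commute)
    show "x \<in> Sigma (insert 1 I) B"
    proof (cases "a = 1")
      case True thus ?thesis using x bB by simp
    next
      case False
      hence "a \<ge> 2" using x by auto
      have "a * a < a * b" using x by simp
      hence "a * a < n" using x(4) by linarith
      hence "a^2 < n" by (simp add: power2_eq_square)
      moreover have "2 * 2 \<le> a * a" using \<open>a \<ge> 2\<close> by (intro mult_le_mono)
      hence "1 < a^2" by (simp add: power2_eq_square)
      ultimately have "a \<in> I" unfolding I_def by simp
      thus ?thesis using x bB by simp
    qed
  next
    fix x assume "x \<in> Sigma (insert 1 I) B"
    then obtain a b where x: "x = (a, b)" "a \<in> insert 1 I" "b \<in> B a" by auto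
    have a0: "a > 0" using x(2) unfolding I_def by (auto intro: Nat.gr0I)
    have "b * a \<le> n" using x(3) a0 unfolding B_def by (simp add: less_eq_div_iff_mult_less_eq)
    thus "x \<in> L" using x a0 unfolding B_def L_def C_def by (auto simp: ac_simps coprime_commute)
  qed
  have cardL: "card L = (\<Sum>a\<in>insert 1 I. card (B a))"
    unfolding Leq using finI finB by (simp add: card_SigmaI)
  have B1: "card (B 1) = n - 1"
  proof -
    have "B 1 = {1<..n}" unfolding B_def by auto
    thus ?thesis by simp
  qed
  have Ba: "int (card (B a)) = int (phi (real_of_int \<lfloor>real n / real a\<rfloor>) a) - int (totient a)"
    if "a \<in> I" for a
  proof -
    have a0: "a > 0" using that unfolding I_def by (auto intro: Nat.gr0I)
    have "a * a < n" using that unfolding I_def by (simp add: power2_eq_square)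
    hence ale: "a \<le> n div a" using a0 by (simp add: less_eq_div_iff_mult_less_eq)
    have "phi (real_of_int \<lfloor>real n / real a\<rfloor>) a = card {k. 0 < k \<and> k \<le> n div a \<and> coprime k a}"
      unfolding phi_def floor_divide_of_nat_eq by simp
    also have "{k. 0 < k \<and> k \<le> n div a \<and> coprime k a} = totatives a \<union> B a"
      using ale a0 unfolding B_def totatives_def by auto
    also have "card (totatives a \<union> B a) = card (totatives a) + card (B a)"
      by (rule card_Un_disjoint) (auto simp: finB B_def totatives_def)
    finally show ?thesis by (simp add: totient_def)
  qed
  have "int (card C) = 1 + 2 * int (card L)" using cardC cardU by simp
  also have "int (card L) = int (n - 1) + (\<Sum>a\<in>I. int (card (B a)))"
    using cardL 1 finI B1 by (simp add: of_nat_sum)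
  also have "(\<Sum>a\<in>I. int (card (B a))) = (\<Sum>a\<in>I. int (phi (real_of_int \<lfloor>real n / real a\<rfloor>) a) - int (totient a))"
    using Ba by (rule sum.cong[OF refl])
  finally show ?thesis unfolding C_def I_def using assms by simp
qed

theorem mainTheorem5:
  fixes n :: nat
  assumes "n > 0"
  shows "int (\<Sum>i=1..n. 2 ^ omega i)
           = (\<Sum>i\<in>{i::nat. 1 \<le> i^2 \<and> i^2 \<le> n}. moebius i * int (D2 (n div i^2)))
       \<and> int (\<Sum>i=1..n. 2 ^ omega i)
           = 2 * int n - 1 + 2 * (\<Sum>i\<in>{i::nat. 1 < i^2 \<and> i^2 < n}.
                 (int (phi (real_of_int \<lfloor>real n / real i\<rfloor>) i) - int (totient i)))"
  using sum_unitary[of n] ident1[of n] ident2[OF assms] by simp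

end
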